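(* Let $k\ge 0$ be an integer. A finite nonempty subset $\sigma\subseteq\mathbb{Z}^2$ is a simplex of $\mathrm{VR}(\mathbb{Z}^2;k)$ if and only if $\bigcap_{v\in\sigma}B_{\mathbb{R}^2}(v,\tfrac{k+1}{2})\neq\emptyset$.
   Context: $\mathbb{Z}^2$ and $\mathbb{R}^2$ carry the $l^1$ metric $d((x,y),(x',y'))=|x-x'|+|y-y'|$, and $B_{\mathbb{R}^2}(v,r)=\{p\in\mathbb{R}^2: d(p,v)< r\}$ is the open $l^1$ ball. $\mathrm{VR}(X;r)$ is the simplicial complex on vertex set $X$ whose simplices are the finite nonempty subsets of diameter at most $r$. *)

theory Defs
  imports "HOL-Analysis.Analysis"
begin

definition l1_dist_Z :: "int \<times> int \<Rightarrow> int \<times> int \<Rightarrow> int" where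
  "l1_dist_Z p q = \<bar>fst p - fst q\<bar> + \<bar>snd p - snd q\<bar>"

definition l1_dist_R :: "real \<times> real \<Rightarrow> real \<times> real \<Rightarrow> real" where
  "l1_dist_R p q = \<bar>fst p - fst q\<bar> + \<bar>snd p - snd q\<bar>"

definition real_pt :: "int \<times> int \<Rightarrow> real \<times> real" where
  "real_pt v = (real_of_int (fst v), real_of_int (snd v))"

definition l1_ball_R :: "real \<times> real \<Rightarrow> real \<Rightarrow> (real \<times> real) set" where
  "l1_ball_R v r = {p. l1_dist_R p v < r}"

definition VR_simplex_Z2 :: "(int \<times> int) set \<Rightarrow> real \<Rightarrow> (int \<times> int) set \<Rightarrow> bool" where
  "VR_simplex_Z2 X r \<sigma> \<longleftrightarrow> finite \<sigma> \<and> \<sigma> \<noteq> {} \<and> \<sigma> \<subseteq> X \<and>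
     (\<forall>u\<in>\<sigma>. \<forall>w\<in>\<sigma>. real_of_int (l1_dist_Z u w) \<le> r)"

end

theory Submission
  imports Defs
begin

lemma key:
  fixes x y a b c d p1 p2 kk :: real
  assumes "a \<le> x + y" "x + y \<le> b" "c \<le> x - y" "x - y \<le> d" "b - a \<le> kk" "d - c \<le> kk"
    "p1 = (a+b+c+d)/4" "p2 = (a+b-c-d)/4"
  shows "\<bar>x - p1\<bar> + \<bar>y - p2\<bar> < (kk + 1)/2"
  using assms by (simp add: abs_if split: if_splits)

theorem corollary4p3:
  fixes k :: nat and \<sigma> :: "(int \<times> int) set"
  assumes "finite \<sigma>" and "\<sigma> \<noteq> {}"
  shows "VR_simplex_Z2 UNIV (real k) \<sigma> \<longleftrightarrow>
         (\<Inter>v\<in>\<sigma>. l1_ball_R (real_pt v) ((real k + 1) / 2)) \<noteq> {}"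
proof
  assume H: "VR_simplex_Z2 UNIV (real k) \<sigma>"
  hence D: "\<And>u w. u \<in> \<sigma> \<Longrightarrow> w \<in> \<sigma> \<Longrightarrow> \<bar>fst u - fst w\<bar> + \<bar>snd u - snd w\<bar> \<le> int k"
    unfolding VR_simplex_Z2_def l1_dist_Z_def by (metis of_int_le_iff of_int_of_nat_eq)
  define S where "S = (\<lambda>v. fst v + snd v) ` \<sigma>"
  define T where "T = (\<lambda>v. fst v - snd v) ` \<sigma>"
  have fS: "finite S" "S \<noteq> {}" "finite T" "T \<noteq> {}" using assms S_def T_def by auto
  obtain u1 where u1: "u1 \<in> \<sigma>" "Max S = fst u1 + snd u1" using Max_in[OF fS(1,2)] S_def by auto
  obtain u2 where u2: "u2 \<in> \<sigma>" "Min S = fst u2 + snd u2" using Min_in[OF fS(1,2)] S_def by auto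
  obtain u3 where u3: "u3 \<in> \<sigma>" "Max T = fst u3 - snd u3" using Max_in[OF fS(3,4)] T_def by auto
  obtain u4 where u4: "u4 \<in> \<sigma>" "Min T = fst u4 - snd u4" using Min_in[OF fS(3,4)] T_def by auto
  have k1: "Max S - Min S \<le> int k" using D[OF u1(1) u2(1)] u1 u2 by (simp add: abs_if split: if_splits)
  have k2: "Max T - Min T \<le> int k" using D[OF u3(1) u4(1)] u3 u4 by (simp add: abs_if split: if_splits)
  define a where "a = real_of_int (Min S)"
  define b where "b = real_of_int (Max S)"
  define c where "c = real_of_int (Min T)"
  define d where "d = real_of_int (Max T)"
  define p where "p = ((a+b+c+d)/4, (a+b-c-d)/4)"
  have "p \<in> l1_ball_R (real_pt v) ((real k + 1) / 2)" if v: "v \<in> \<sigma>" for v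
  proof -
    have "Min S \<le> fst v + snd v" "fst v + snd v \<le> Max S"
      using v fS S_def by auto
    moreover have "Min T \<le> fst v - snd v" "fst v - snd v \<le> Max T"
      using v fS T_def by auto
    ultimately have r: "a \<le> real_of_int (fst v) + real_of_int (snd v)"
       "real_of_int (fst v) + real_of_int (snd v) \<le> b"
       "c \<le> real_of_int (fst v) - real_of_int (snd v)"
       "real_of_int (fst v) - real_of_int (snd v) \<le> d"
      unfolding a_def b_def c_def d_def by linarith+
    have "b - a \<le> real k" "d - c \<le> real k" using k1 k2 unfolding a_def b_def c_def d_def
      by (metis of_int_diff of_int_le_iff of_int_of_nat_eq)+
    from key[OF r this, of "fst p" "snd p"]
    show ?thesis unfolding l1_ball_R_def l1_dist_R_def real_pt_def p_def
      by (simp add: abs_minus_commute)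
  qed
  thus "(\<Inter>v\<in>\<sigma>. l1_ball_R (real_pt v) ((real k + 1) / 2)) \<noteq> {}" by blast
next
  assume "(\<Inter>v\<in>\<sigma>. l1_ball_R (real_pt v) ((real k + 1) / 2)) \<noteq> {}"
  then obtain p where p: "\<And>v. v \<in> \<sigma> \<Longrightarrow> p \<in> l1_ball_R (real_pt v) ((real k + 1) / 2)" by blast
  have "real_of_int (l1_dist_Z u w) \<le> real k" if "u \<in> \<sigma>" "w \<in> \<sigma>" for u w
  proof -
    have "l1_dist_R p (real_pt u) < (real k + 1)/2" "l1_dist_R p (real_pt w) < (real k + 1)/2"
      using p that unfolding l1_ball_R_def by auto
    hence "real_of_int (l1_dist_Z u w) < real k + 1"
      unfolding l1_dist_R_def l1_dist_Z_def real_pt_def by (simp add: abs_if split: if_splits) linarith?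
    hence "l1_dist_Z u w < int k + 1" by linarith
    thus ?thesis by linarith
  qed
  thus "VR_simplex_Z2 UNIV (real k) \<sigma>" unfolding VR_simplex_Z2_def using assms by auto
qed

end
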